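(* Let $D=(0,1)$, $\alpha\in(1,2)$, $\delta_0=\arccos(c_0/C_0)$, fix $\delta_1\in(\delta_0,\pi/2)$, and for $t>0$ let $\Gamma^t_{\delta_1}=\Gamma_1\cup\Gamma_2\cup\Gamma_t$ with $\Gamma_1=\{\rho e^{\mathrm{i}\delta_1}:\rho\ge t^{-1}\}$, $\Gamma_2=\{\rho e^{-\mathrm{i}\delta_1}:\rho\ge t^{-1}\}$, $\Gamma_t=\{t^{-1}e^{\mathrm{i}\theta}:\delta_1\le|\theta|\le\pi\}$. Then there is a constant $C>0$, independent of $t$, such that for all $t>0$, all $\varphi\in\widetilde H^{\alpha/2}(D)$ and all $z\in\Gamma^t_{\delta_1}$, $$|z|\,\|\varphi\|_{L^2(D)}^2+\|\varphi\|_{\widetilde H^{\alpha/2}(D)}^2\le C\,\big|z\|\varphi\|_{L^2(D)}^2-A(\varphi,\varphi)\big|.$$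
   Context: For $\gamma>0$, $({}_0I_x^\gamma f)(x)=\frac{1}{\Gamma(\gamma)}\int_0^x(x-t)^{\gamma-1}f(t)\,dt$ and $({}_xI_1^\gamma f)(x)=\frac{1}{\Gamma(\gamma)}\int_x^1(t-x)^{\gamma-1}f(t)\,dt$; for $n-1<\beta<n$, ${}_0^RD_x^\beta u=\frac{d^n}{dx^n}({}_0I_x^{n-\beta}u)$ and ${}_x^RD_1^\beta u=(-1)^n\frac{d^n}{dx^n}({}_xI_1^{n-\beta}u)$ (Riemann–Liouville), extended by continuity. $\widetilde H^s(D)$ is the set of $u\in H^s(D)$ whose zero extension is in $H^s(\mathbb{R})$. The sesquilinear form $A(\varphi,\psi)=-\big({}_0^RD_x^{\alpha/2}\varphi,\ {}_x^RD_1^{\alpha/2}\psi\big)$ on $U=\widetilde H^{\alpha/2}(D)$ is known to satisfy $\Re A(\psi,\psi)\ge c_0\|\psi\|_U^2$ and $|A(\varphi,\psi)|\le C_0\|\varphi\|_U\|\psi\|_U$ for constants $0<c_0\le C_0$. *)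

theory Defs
  imports "HOL-Analysis.Analysis"
begin

text \<open>The interval D = (0,1). Functions on D are represented by their zero
  extension, i.e. by maps real => complex vanishing outside D.\<close>

definition D_int :: "real set" where "D_int = {0<..<1}"

definition fourier :: "(real \<Rightarrow> complex) \<Rightarrow> real \<Rightarrow> complex" where
  "fourier u \<xi> = (LINT x|lborel. u x * exp (- \<i> * complex_of_real (\<xi> * x)))"

definition Htilde :: "real \<Rightarrow> (real \<Rightarrow> complex) \<Rightarrow> bool" where
  "Htilde s u \<longleftrightarrow> u \<in> borel_measurable lborel \<and> (\<forall>x. x \<notin> D_int \<longrightarrow> u x = 0)
     \<and> integrable lborel (\<lambda>x. (cmod (u x))\<^sup>2)
     \<and> integrable lborel (\<lambda>\<xi>. (1 + \<xi>\<^sup>2) powr s * (cmod (fourier u \<xi>))\<^sup>2)"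

definition Htilde_norm :: "real \<Rightarrow> (real \<Rightarrow> complex) \<Rightarrow> real" where
  "Htilde_norm s u = sqrt (LINT \<xi>|lborel. (1 + \<xi>\<^sup>2) powr s * (cmod (fourier u \<xi>))\<^sup>2)"

definition L2_norm :: "(real \<Rightarrow> complex) \<Rightarrow> real" where
  "L2_norm u = sqrt (LINT x:D_int|lborel. (cmod (u x))\<^sup>2)"

definition RL_int_left :: "real \<Rightarrow> (real \<Rightarrow> complex) \<Rightarrow> real \<Rightarrow> complex" where
  "RL_int_left \<gamma> f x = complex_of_real (1 / Gamma \<gamma>) *
     (LINT t:{0..x}|lborel. complex_of_real ((x - t) powr (\<gamma> - 1)) * f t)"

definition RL_int_right :: "real \<Rightarrow> (real \<Rightarrow> complex) \<Rightarrow> real \<Rightarrow> complex" where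
  "RL_int_right \<gamma> f x = complex_of_real (1 / Gamma \<gamma>) *
     (LINT t:{x..1}|lborel. complex_of_real ((t - x) powr (\<gamma> - 1)) * f t)"

definition test_fun :: "(real \<Rightarrow> real) \<Rightarrow> bool" where
  "test_fun \<psi> \<longleftrightarrow> (\<forall>n x. ((deriv ^^ n) \<psi>) differentiable (at x))
     \<and> (\<exists>a b. 0 < a \<and> b < 1 \<and> (\<forall>x. x \<notin> {a..b} \<longrightarrow> \<psi> x = 0))"

definition weak_deriv_D :: "(real \<Rightarrow> complex) \<Rightarrow> (real \<Rightarrow> complex) \<Rightarrow> bool" where
  "weak_deriv_D F g \<longleftrightarrow> set_integrable lborel D_int F
     \<and> g \<in> borel_measurable lborel
     \<and> set_integrable lborel D_int (\<lambda>x. (cmod (g x))\<^sup>2)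
     \<and> (\<forall>\<psi>. test_fun \<psi> \<longrightarrow>
          (LINT x:D_int|lborel. F x * complex_of_real (deriv \<psi> x))
          = - (LINT x:D_int|lborel. g x * complex_of_real (\<psi> x)))"

text \<open>Riemann--Liouville derivatives of order 0 < beta < 1 (n = 1), understood in
  the weak sense (this is the extension by continuity to H-tilde^{beta}(D)).\<close>
definition RL_deriv_left :: "real \<Rightarrow> (real \<Rightarrow> complex) \<Rightarrow> real \<Rightarrow> complex" where
  "RL_deriv_left \<beta> u = (SOME g. weak_deriv_D (RL_int_left (1 - \<beta>) u) g)"

definition RL_deriv_right :: "real \<Rightarrow> (real \<Rightarrow> complex) \<Rightarrow> real \<Rightarrow> complex" where
  "RL_deriv_right \<beta> u = (\<lambda>x. - (SOME g. weak_deriv_D (RL_int_right (1 - \<beta>) u) g) x)"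

definition form_A :: "real \<Rightarrow> (real \<Rightarrow> complex) \<Rightarrow> (real \<Rightarrow> complex) \<Rightarrow> complex" where
  "form_A \<alpha> \<phi> \<psi> = - (LINT x:D_int|lborel.
       RL_deriv_left (\<alpha>/2) \<phi> x * cnj (RL_deriv_right (\<alpha>/2) \<psi> x))"

definition contour :: "real \<Rightarrow> real \<Rightarrow> complex set" where
  "contour \<delta>\<^sub>1 t =
     {z. \<exists>\<rho>. \<rho> \<ge> 1 / t \<and> z = complex_of_real \<rho> * cis \<delta>\<^sub>1}
   \<union> {z. \<exists>\<rho>. \<rho> \<ge> 1 / t \<and> z = complex_of_real \<rho> * cis (- \<delta>\<^sub>1)}
   \<union> {z. \<exists>\<theta>. \<delta>\<^sub>1 \<le> \<bar>\<theta>\<bar> \<and> \<bar>\<theta>\<bar> \<le> pi \<and> z = complex_of_real (1 / t) * cis \<theta>}"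

end

theory Submission
  imports Defs
begin

lemma key_real:
  fixes x1 y1 x2 y2 p q k m :: real
  assumes "p \<ge> 0" "q \<ge> 0" "p\<^sup>2 = x1\<^sup>2 + y1\<^sup>2" "q\<^sup>2 = x2\<^sup>2 + y2\<^sup>2"
    "x2 \<ge> k * q" "x1 \<le> m * p" "m < k" "k - m \<le> 2"
  shows "((k - m) * (p + q) / 2)\<^sup>2 \<le> (x1 - x2)\<^sup>2 + (y1 - y2)\<^sup>2"
proof -
  have d1: "(q*x1 - p*x2)\<^sup>2 + (q*y1 - p*y2)\<^sup>2 = 2*p*q*(p*q - (x1*x2+y1*y2))"
  proof -
    have "(q*x1 - p*x2)\<^sup>2 + (q*y1 - p*y2)\<^sup>2 = q\<^sup>2*(x1\<^sup>2+y1\<^sup>2) + p\<^sup>2*(x2\<^sup>2+y2\<^sup>2) - 2*p*q*(x1*x2+y1*y2)"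
      by (simp add: power2_eq_square algebra_simps)
    also have "\<dots> = q\<^sup>2*p\<^sup>2 + p\<^sup>2*q\<^sup>2 - 2*p*q*(x1*x2+y1*y2)" using assms(3,4) by simp
    also have "\<dots> = 2*p*q*(p*q - (x1*x2+y1*y2))" by (simp add: power2_eq_square algebra_simps)
    finally show ?thesis .
  qed
  have h0: "p*x2 - q*x1 \<ge> p*q*(k-m)"
  proof -
    have "p*x2 \<ge> p*(k*q)" using assms(1,5) mult_left_mono by blast
    moreover have "q*x1 \<le> q*(m*p)" using assms(2,6) mult_left_mono by blast
    ultimately show ?thesis by (simp add: algebra_simps)
  qed
  have pq0: "p*q*(k-m) \<ge> 0" using assms by simp
  have h1: "(q*x1 - p*x2)\<^sup>2 \<ge> (p*q*(k-m))\<^sup>2"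
  proof -
    have "(p*q*(k-m))\<^sup>2 \<le> (p*x2 - q*x1)\<^sup>2" using h0 pq0 power_mono by blast
    moreover have "(p*x2 - q*x1)\<^sup>2 = (q*x1 - p*x2)\<^sup>2" by (rule power2_commute)
    ultimately show ?thesis by simp
  qed
  have h2: "2*p*q*(p*q - (x1*x2+y1*y2)) \<ge> (p*q*(k-m))\<^sup>2"
    using d1 h1 by (smt (verit) zero_le_power2)
  have h3: "p*q - (x1*x2+y1*y2) \<ge> p*q*(k-m)\<^sup>2/2"
  proof (cases "p*q = 0")
    case True
    then have "p = 0 \<or> q = 0" by simp
    then have "x1*x2+y1*y2 = 0" using assms(3,4)
      by (metis mult_zero_left mult_zero_right power_zero_numeral sum_power2_eq_zero_iff)
    moreover have "p*q*(k-m)\<^sup>2/2 = 0" using True by simp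
    ultimately show ?thesis using True by linarith
  next
    case False
    then have "p*q > 0" using assms(1,2) by simp
    have "2*(p*q)*(p*q - (x1*x2+y1*y2)) \<ge> 2*(p*q)*(p*q*(k-m)\<^sup>2/2)"
    proof -
      have "2*(p*q)*(p*q*(k-m)\<^sup>2/2) = (p*q*(k-m))\<^sup>2" by (simp add: power2_eq_square)
      moreover have "2*(p*q) = 2*p*q" by (simp add: mult.assoc)
      ultimately show ?thesis using h2 by (simp only:)
    qed
    moreover have "2*(p*q) > 0" using \<open>p*q>0\<close> by simp
    ultimately show ?thesis by (rule mult_left_le_imp_le)
  qed
  have e: "(x1 - x2)\<^sup>2 + (y1 - y2)\<^sup>2 = (p-q)\<^sup>2 + 2*(p*q - (x1*x2+y1*y2))"
    using assms(3,4) by (simp add: power2_eq_square algebra_simps)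
  have km: "(k-m)\<^sup>2 \<le> 4"
  proof -
    have "(k-m)\<^sup>2 \<le> 2\<^sup>2" using assms(7,8) by (intro power_mono) auto
    thus ?thesis by simp
  qed
  have "((k - m) * (p + q) / 2)\<^sup>2 = (k-m)\<^sup>2/4 * (p-q)\<^sup>2 + (k-m)\<^sup>2 * (p*q)"
    by (simp add: power2_eq_square field_simps)
  also have "\<dots> \<le> (p-q)\<^sup>2 + (k-m)\<^sup>2 * (p*q)"
  proof -
    have "(k-m)\<^sup>2/4 * (p-q)\<^sup>2 \<le> 1 * (p-q)\<^sup>2" using km by (intro mult_right_mono) auto
    thus ?thesis by simp
  qed
  also have "\<dots> \<le> (x1 - x2)\<^sup>2 + (y1 - y2)\<^sup>2"
  proof -
    have "(k-m)\<^sup>2 * (p*q) \<le> 2*(p*q - (x1*x2+y1*y2))" using h3 by (simp add: field_simps mult.commute mult.left_commute)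
    thus ?thesis unfolding e by simp
  qed
  finally show ?thesis .
qed

lemma key_complex:
  fixes u a :: complex and k m :: real
  assumes "Re a \<ge> k * cmod a" "Re u \<le> m * cmod u" "m < k" "k - m \<le> 2"
  shows "(k - m) / 2 * (cmod u + cmod a) \<le> cmod (u - a)"
proof -
  have "((k - m) * (cmod u + cmod a) / 2)\<^sup>2 \<le> (Re u - Re a)\<^sup>2 + (Im u - Im a)\<^sup>2"
    by (rule key_real) (use assms in \<open>auto simp: cmod_power2\<close>)
  also have "\<dots> = (cmod (u - a))\<^sup>2" by (simp add: cmod_power2)
  finally have "((k - m) * (cmod u + cmod a) / 2)\<^sup>2 \<le> (cmod (u - a))\<^sup>2" .
  then have "\<bar>(k - m) * (cmod u + cmod a) / 2\<bar> \<le> cmod (u - a)"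
    by (metis abs_le_square_iff abs_norm_cancel)
  then show ?thesis by simp
qed

theorem lemma4p4:
  fixes \<alpha> c\<^sub>0 C\<^sub>0 \<delta>\<^sub>1 :: real
  assumes "1 < \<alpha>" and "\<alpha> < 2"
    and "0 < c\<^sub>0" and "c\<^sub>0 \<le> C\<^sub>0"
    and coercive: "\<forall>\<psi>. Htilde (\<alpha>/2) \<psi> \<longrightarrow>
                     Re (form_A \<alpha> \<psi> \<psi>) \<ge> c\<^sub>0 * (Htilde_norm (\<alpha>/2) \<psi>)\<^sup>2"
    and bounded: "\<forall>\<phi> \<psi>. Htilde (\<alpha>/2) \<phi> \<and> Htilde (\<alpha>/2) \<psi> \<longrightarrow>
                     cmod (form_A \<alpha> \<phi> \<psi>) \<le> C\<^sub>0 * Htilde_norm (\<alpha>/2) \<phi> * Htilde_norm (\<alpha>/2) \<psi>"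
    and "arccos (c\<^sub>0 / C\<^sub>0) < \<delta>\<^sub>1" and "\<delta>\<^sub>1 < pi / 2"
  shows "\<exists>C>0. \<forall>t>0. \<forall>\<phi>. Htilde (\<alpha>/2) \<phi> \<longrightarrow> (\<forall>z \<in> contour \<delta>\<^sub>1 t.
           cmod z * (L2_norm \<phi>)\<^sup>2 + (Htilde_norm (\<alpha>/2) \<phi>)\<^sup>2
             \<le> C * cmod (z * complex_of_real ((L2_norm \<phi>)\<^sup>2) - form_A \<alpha> \<phi> \<phi>))"
proof -
  define k where "k = c\<^sub>0 / C\<^sub>0"
  define m where "m = cos \<delta>\<^sub>1"
  have C0: "C\<^sub>0 > 0" using assms(3,4) by simp
  have k01: "0 < k" "k \<le> 1" using assms(3,4) C0 by (auto simp: k_def)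
  have d0: "0 \<le> \<delta>\<^sub>1"
    using assms(7) arccos_lbound[of k] k01 unfolding k_def by linarith
  have mk: "m < k"
  proof -
    have "cos \<delta>\<^sub>1 < cos (arccos k)"
      using assms(7,8) d0 k01 arccos_lbound[of k]
      by (intro cos_monotone_0_pi) (auto simp: k_def)
    thus ?thesis using k01 by (simp add: m_def cos_arccos)
  qed
  have m0: "m \<ge> 0" unfolding m_def using d0 assms(8) by (intro cos_ge_zero) auto
  have km2: "k - m \<le> 2" using k01 m0 by simp
  define C where "C = max 1 (1/c\<^sub>0) * (2 / (k - m))"
  have Cpos: "C > 0" using mk by (simp add: C_def)
  show ?thesis
  proof (intro exI[of _ C] conjI Cpos allI impI ballI)
    fix t :: real and \<phi> z
    assume t: "t > 0" and H: "Htilde (\<alpha>/2) \<phi>" and z: "z \<in> contour \<delta>\<^sub>1 t"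
    define a where "a = form_A \<alpha> \<phi> \<phi>"
    define L where "L = (L2_norm \<phi>)\<^sup>2"
    define N where "N = (Htilde_norm (\<alpha>/2) \<phi>)\<^sup>2"
    define u where "u = z * complex_of_real L"
    have L0: "L \<ge> 0" by (simp add: L_def)
    have ReA: "Re a \<ge> c\<^sub>0 * N" using coercive H by (simp add: a_def N_def)
    have modA: "cmod a \<le> C\<^sub>0 * N" using bounded H by (simp add: a_def N_def power2_eq_square algebra_simps)
    have ak: "Re a \<ge> k * cmod a"
    proof -
      have "k * cmod a \<le> k * (C\<^sub>0 * N)" using modA k01 by (simp add: mult_left_mono)
      also have "\<dots> = c\<^sub>0 * N" using C0 by (simp add: k_def)
      finally show ?thesis using ReA by linarith
    qed
    have Nle: "N \<le> cmod a / c\<^sub>0"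
    proof -
      have "c\<^sub>0 * N \<le> cmod a" using ReA complex_Re_le_cmod[of a] by linarith
      thus ?thesis using assms(3) by (simp add: field_simps)
    qed
    have zm: "Re z \<le> m * cmod z"
    proof -
      { fix \<rho> s assume "\<rho> \<ge> 1/t" "z = complex_of_real \<rho> * cis s" "cos s = cos \<delta>\<^sub>1"
        then have "\<rho> > 0" using t by (smt (verit) divide_pos_pos)
        then have ?thesis using \<open>z = _\<close> \<open>cos s = _\<close> by (simp add: m_def norm_mult) }
      moreover
      { fix \<theta> assume th: "\<delta>\<^sub>1 \<le> \<bar>\<theta>\<bar>" "\<bar>\<theta>\<bar> \<le> pi" and zz: "z = complex_of_real (1 / t) * cis \<theta>"
        have "cos \<theta> = cos \<bar>\<theta>\<bar>" by (simp add: abs_if)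
        also have "\<dots> \<le> cos \<delta>\<^sub>1" using th d0 by (intro cos_monotone_0_pi_le) auto
        finally have "cos \<theta> \<le> m" by (simp add: m_def)
        have "cmod z = 1/t" using zz t by (simp add: norm_divide)
        moreover have "Re z = cos \<theta> / t" using zz by simp
        ultimately have ?thesis using \<open>cos \<theta> \<le> m\<close> t by (simp add: divide_right_mono) }
      ultimately show ?thesis using z unfolding contour_def by auto
    qed
    have um: "Re u \<le> m * cmod u"
    proof -
      have "Re u = Re z * L" by (simp add: u_def)
      also have "\<dots> \<le> m * cmod z * L" using zm L0 mult_right_mono by blast
      also have "\<dots> = m * cmod u" using L0 by (simp add: u_def norm_mult)
      finally show ?thesis .
    qed
    have key: "(k - m) / 2 * (cmod u + cmod a) \<le> cmod (u - a)"
      by (rule key_complex[OF ak um mk km2])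
    have "cmod z * L + N \<le> cmod u + cmod a / c\<^sub>0"
      using Nle L0 by (simp add: u_def norm_mult)
    also have "\<dots> \<le> max 1 (1/c\<^sub>0) * (cmod u + cmod a)"
    proof -
      have "1 * cmod u \<le> max 1 (1/c\<^sub>0) * cmod u" by (intro mult_right_mono) (simp_all)
      then have "cmod u \<le> max 1 (1/c\<^sub>0) * cmod u" by simp
      moreover have "cmod a / c\<^sub>0 \<le> max 1 (1/c\<^sub>0) * cmod a"
      proof -
        have "(1/c\<^sub>0) * cmod a \<le> max 1 (1/c\<^sub>0) * cmod a" by (intro mult_right_mono) simp_all
        moreover have "cmod a / c\<^sub>0 = (1/c\<^sub>0) * cmod a" by simp
        ultimately show ?thesis by linarith
      qed
      ultimately show ?thesis by (simp only: distrib_left)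
    qed
    also have "\<dots> \<le> max 1 (1/c\<^sub>0) * ((2 / (k - m)) * cmod (u - a))"
    proof -
      have "cmod u + cmod a \<le> (2 / (k - m)) * cmod (u - a)"
        using key mk by (simp add: field_simps)
      thus ?thesis by (rule mult_left_mono) simp
    qed
    also have "\<dots> = C * cmod (u - a)" by (simp add: C_def)
    finally show "cmod z * (L2_norm \<phi>)\<^sup>2 + (Htilde_norm (\<alpha>/2) \<phi>)\<^sup>2
             \<le> C * cmod (z * complex_of_real ((L2_norm \<phi>)\<^sup>2) - form_A \<alpha> \<phi> \<phi>)"
      by (simp add: u_def a_def L_def N_def)
  qed
qed

end
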